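(* Let $P_{XY}$ be a probability distribution on $\mathcal X\times\mathcal Y$ (finite sets) with $X$-marginal $P_X$. For each $n$ let $\mathcal F_n^{P_X}=\{P_X^{\times n}\times Q_{Y^n}: Q_{Y^n}\in\mathcal P(\mathcal Y^n)\}$. Then for every $\varepsilon\in(0,1)$ the limit $\lim_{n\to\infty}\frac1n D_H^\varepsilon(\mathcal F_n^{P_X}\|P_{XY}^{\times n})$ exists and equals $U(X;Y)$. Equivalently, $$U(X;Y)=\mathrm{Stein}(\mathcal F^{P_X}\|P_{XY})=\mathrm{Stein}^\dagger(\mathcal F^{P_X}\|P_{XY}).$$
   Context: $D(P\|Q)=\sum_x P(x)\log\frac{P(x)}{Q(x)}$ (with $0\log(0/q)=0$; $+\infty$ if $P\not\ll Q$). The umlaut information is $U(X;Y)=\min_{Q_Y\in\mathcal P(\mathcal Y)}D(P_X\times Q_Y\|P_{XY})$. For a set $\mathcal F_n$ of distributions on a finite set $\mathcal Z$ (null hypothesis) and a distribution $R$ on $\mathcal Z$ (alternative), a test is a function $T:\mathcal Z\to[0,1]$ (probability of accepting the null); its type I error is $\sup_{Q\in\mathcal F_n}\sum_z Q(z)(1-T(z))$ and its type II error is $\sum_z R(z)T(z)$. $D_H^\varepsilon(\mathcal F_n\|R)=-\log\min\{\text{type II error}:\text{type I error}\le\varepsilon\}$. For $\mathcal F=(\mathcal F_n)_n$ with $\mathcal F_n$ on $\mathcal Z^n$: $\mathrm{Stein}(\mathcal F\|R)=\lim_{\varepsilon\to0}\liminf_{n}\frac1nD_H^\varepsilon(\mathcal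 F_n\|R^{\times n})$ and $\mathrm{Stein}^\dagger(\mathcal F\|R)=\lim_{\varepsilon\to1^-}\limsup_n\frac1nD_H^\varepsilon(\mathcal F_n\|R^{\times n})$. *)

theory Defs
  imports "HOL-Analysis.Analysis"
begin

definition is_dist :: "'a set \<Rightarrow> ('a \<Rightarrow> real) \<Rightarrow> bool" where
  "is_dist A P \<longleftrightarrow> (\<forall>x\<in>A. 0 \<le> P x) \<and> sum P A = 1"

definition words :: "'a set \<Rightarrow> nat \<Rightarrow> 'a list set" where
  "words A n = {xs. set xs \<subseteq> A \<and> length xs = n}"

definition iid :: "('a \<Rightarrow> real) \<Rightarrow> 'a list \<Rightarrow> real" where
  "iid P xs = prod_list (map P xs)"

definition KL :: "'a set \<Rightarrow> ('a \<Rightarrow> real) \<Rightarrow> ('a \<Rightarrow> real) \<Rightarrow> ereal" where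
  "KL A P Q = (if \<exists>x\<in>A. P x \<noteq> 0 \<and> Q x = 0 then \<infinity>
     else ereal (\<Sum>x\<in>A. if P x = 0 then 0 else P x * ln (P x / Q x)))"

definition marginalX :: "('x \<times> 'y::finite \<Rightarrow> real) \<Rightarrow> 'x \<Rightarrow> real" where
  "marginalX PXY x = (\<Sum>y\<in>UNIV. PXY (x, y))"

definition umlaut :: "('x::finite \<times> 'y::finite \<Rightarrow> real) \<Rightarrow> ereal" where
  "umlaut PXY = (INF QY\<in>{QY. is_dist UNIV QY}.
       KL UNIV (\<lambda>(x, y). marginalX PXY x * QY y) PXY)"

text \<open>Hypothesis testing on a finite set A; a test T : A \<rightarrow> [0,1] is the probability of
  accepting the null hypothesis F (a set of distributions); R is the alternative.\<close>
definition tests :: "'a set \<Rightarrow> ('a \<Rightarrow> real) set" where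
  "tests A = {T. \<forall>z\<in>A. 0 \<le> T z \<and> T z \<le> 1}"

definition typeI :: "'a set \<Rightarrow> ('a \<Rightarrow> real) set \<Rightarrow> ('a \<Rightarrow> real) \<Rightarrow> real" where
  "typeI A F T = (SUP Q\<in>F. \<Sum>z\<in>A. Q z * (1 - T z))"

definition typeII :: "'a set \<Rightarrow> ('a \<Rightarrow> real) \<Rightarrow> ('a \<Rightarrow> real) \<Rightarrow> real" where
  "typeII A R T = (\<Sum>z\<in>A. R z * T z)"

definition DH :: "real \<Rightarrow> 'a set \<Rightarrow> ('a \<Rightarrow> real) set \<Rightarrow> ('a \<Rightarrow> real) \<Rightarrow> ereal" where
  "DH eps A F R =
    (let m = Inf {typeII A R T | T. T \<in> tests A \<and> typeI A F T \<le> eps}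
     in if m = 0 then \<infinity> else ereal (- ln m))"

definition nullFamily :: "('x \<Rightarrow> real) \<Rightarrow> nat \<Rightarrow> (('x \<times> 'y) list \<Rightarrow> real) set" where
  "nullFamily PX n = {Q. \<exists>QYn. is_dist (words (UNIV::'y set) n) QYn \<and>
      Q = (\<lambda>zs. iid PX (map fst zs) * QYn (map snd zs))}"

end

theory Submission
  imports Defs "HOL-Real_Asymp.Real_Asymp"
begin


lemma words_0: "words A 0 = {[]}" by (auto simp: words_def)

lemma words_Suc: "words A (Suc n) = (\<lambda>(a,xs). a#xs) ` (A \<times> words A n)"
  by (auto simp: words_def image_iff length_Suc_conv)

lemma finite_words: "finite A \<Longrightarrow> finite (words A n)"
  by (induction n) (auto simp: words_0 words_Suc)

lemma sum_words_Suc: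
  "(\<Sum>xs\<in>words A (Suc n). f xs) = (\<Sum>a\<in>A. \<Sum>xs\<in>words A n. f (a#xs))"
proof -
  have "inj_on (\<lambda>(a,xs). a#xs) (A \<times> words A n)" by (auto simp: inj_on_def)
  then have "(\<Sum>xs\<in>words A (Suc n). f xs) = (\<Sum>(a,xs)\<in>A \<times> words A n. f (a#xs))"
    by (simp add: words_Suc sum.reindex case_prod_unfold)
  also have "\<dots> = (\<Sum>a\<in>A. \<Sum>xs\<in>words A n. f (a#xs))"
    by (simp add: sum.cartesian_product)
  finally show ?thesis .
qed

lemma sum_words_prod:
  fixes f :: "'a \<Rightarrow> real"
  shows   "(\<Sum>xs\<in>words A n. prod_list (map f xs)) = (\<Sum>a\<in>A. f a) ^ n"
proof (induction n)
  case (Suc n)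
  have "(\<Sum>xs\<in>words A (Suc n). prod_list (map f xs)) = (\<Sum>a\<in>A. f a * (\<Sum>xs\<in>words A n. prod_list (map f xs)))"
    by (simp add: sum_words_Suc sum_distrib_left)
  also have "\<dots> = (\<Sum>a\<in>A. f a) ^ Suc n" by (simp add: Suc sum_distrib_right)
  finally show ?case .
qed (simp add: words_0)

lemma sum_words_zip:
  fixes f :: "'a \<times> 'b \<Rightarrow> real"
  shows   "(\<Sum>xs\<in>words A (length ys). prod_list (map f (zip xs ys))) = prod_list (map (\<lambda>y. \<Sum>x\<in>A. f (x,y)) ys)"
proof (induction ys)
  case Nil then show ?case by (simp add: words_0)
next
  case (Cons y ys)
  have "(\<Sum>xs\<in>words A (length (y#ys)). prod_list (map f (zip xs (y#ys))))
     = (\<Sum>a\<in>A. f (a,y) * (\<Sum>xs\<in>words A (length ys). prod_list (map f (zip xs ys))))"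
    by (simp add: sum_words_Suc sum_distrib_left)
  also have "\<dots> = prod_list (map (\<lambda>y. \<Sum>x\<in>A. f (x,y)) (y#ys))" by (simp add: Cons sum_distrib_right)
  finally show ?case .
qed

lemma sum_words_pairs:
  assumes "finite A" "finite B"
  shows "(\<Sum>zs\<in>words (A \<times> B) n. F zs) = (\<Sum>ys\<in>words B n. \<Sum>xs\<in>words A n. F (zip xs ys))"
proof -
  have bij: "bij_betw (\<lambda>(xs,ys). zip xs ys) (words A n \<times> words B n) (words (A \<times> B) n)"
  proof (rule bij_betwI[where g="\<lambda>zs. (map fst zs, map snd zs)"])
    show "(\<lambda>(xs,ys). zip xs ys) \<in> words A n \<times> words B n \<rightarrow> words (A \<times> B) n"
      by (fastforce simp: words_def set_zip)
    show "(\<lambda>zs. (map fst zs, map snd zs)) \<in> words (A \<times> B) n \<rightarrow> words A n \<times> words B n"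
      by (auto simp: words_def; fastforce)
    show "\<And>x. x \<in> words A n \<times> words B n \<Longrightarrow> (map fst (case x of (xs, ys) \<Rightarrow> zip xs ys), map snd (case x of (xs, ys) \<Rightarrow> zip xs ys)) = x"
      by (auto simp: words_def)
    show "\<And>y. y \<in> words (A \<times> B) n \<Longrightarrow> (case (map fst y, map snd y) of (xs, ys) \<Rightarrow> zip xs ys) = y"
      by (simp add: zip_map_fst_snd)
  qed
  have "(\<Sum>zs\<in>words (A \<times> B) n. F zs) = (\<Sum>(xs,ys)\<in>words A n \<times> words B n. F (zip xs ys))"
    using sum.reindex_bij_betw[OF bij, of F] by (simp add: case_prod_unfold)
  also have "\<dots> = (\<Sum>xs\<in>words A n. \<Sum>ys\<in>words B n. F (zip xs ys))"
    by (simp add: sum.cartesian_product)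
  also have "\<dots> = (\<Sum>ys\<in>words B n. \<Sum>xs\<in>words A n. F (zip xs ys))"
    by (rule sum.swap)
  finally show ?thesis .
qed

lemma iid_pair: "iid f (map fst zs) * iid g (map snd zs) = prod_list (map (\<lambda>(x,y). f x * g y) zs)"
  by (induction zs) (auto simp: iid_def)

lemma prod_list_mult: fixes f g :: "'a \<Rightarrow> real" shows "prod_list (map (\<lambda>z. f z * g z) zs) = prod_list (map f zs) * prod_list (map g zs)"
  by (induction zs) (auto simp: ac_simps)

lemma exp_quad: assumes "\<bar>x::real\<bar> \<le> 1" shows "exp x \<le> 1 + x + x^2"
proof (cases "0 \<le> x")
  case True then show ?thesis using exp_bound assms by auto
next
  case False
  define y where "y = -x"
  have y: "0 \<le> y" "y \<le> 1" using False assms by (auto simp: y_def)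
  have "1 + y \<le> exp y" by simp
  have "exp x = 1 / exp y" by (simp add: y_def exp_minus field_simps)
  also have "\<dots> \<le> 1 / (1 + y)" using y by (intro divide_left_mono) auto
  also have "\<dots> \<le> 1 - y + y^2"
  proof -
    have "1 \<le> (1 - y + y^2) * (1 + y)" using y by (simp add: algebra_simps power2_eq_square power3_eq_cube)
    then show ?thesis using y by (simp add: divide_le_eq)
  qed
  finally show ?thesis by (simp add: y_def)
qed



lemma DH_ge:
  assumes T: "T \<in> tests A" and I: "typeI A F T \<le> eps" and II: "typeII A R T \<le> b"
    and b: "0 < b" and R: "\<And>z. z \<in> A \<Longrightarrow> 0 \<le> R z"
  shows "ereal (- ln b) \<le> DH eps A F R"
proof -
  define S where "S = {typeII A R T | T. T \<in> tests A \<and> typeI A F T \<le> eps}"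
  have TS: "typeII A R T \<in> S" using T I by (auto simp: S_def)
  have bdd: "bdd_below S"
    unfolding S_def bdd_below_def typeII_def tests_def
    by (rule exI[of _ 0]) (auto intro!: sum_nonneg mult_nonneg_nonneg R)
  have m1: "Inf S \<le> b" using cInf_lower[OF TS bdd] II by linarith
  have m0: "0 \<le> Inf S"
    using TS by (intro cInf_greatest) (auto simp: S_def typeII_def tests_def intro!: sum_nonneg mult_nonneg_nonneg R)
  show ?thesis
  proof (cases "Inf S = 0")
    case True then show ?thesis by (simp add: DH_def S_def[symmetric] Let_def)
  next
    case False
    then have "0 < Inf S" using m0 by linarith
    then have "- ln b \<le> - ln (Inf S)" using m1 by simp
    then show ?thesis using False by (simp add: DH_def S_def[symmetric] Let_def)
  qed
qed

lemma DH_le: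
  assumes ne: "T0 \<in> tests A" "typeI A F T0 \<le> eps"
    and all: "\<And>T. T \<in> tests A \<Longrightarrow> typeI A F T \<le> eps \<Longrightarrow> c \<le> typeII A R T"
    and c: "0 < c"
  shows "DH eps A F R \<le> ereal (- ln c)"
proof -
  define S where "S = {typeII A R T | T. T \<in> tests A \<and> typeI A F T \<le> eps}"
  have "S \<noteq> {}" using ne by (auto simp: S_def)
  then have "c \<le> Inf S" by (intro cInf_greatest) (auto simp: S_def intro: all)
  then show ?thesis using c by (simp add: DH_def S_def[symmetric] Let_def)
qed

lemma iid_nonneg: fixes P :: "'a \<Rightarrow> real" shows "(\<And>x. 0 \<le> P x) \<Longrightarrow> 0 \<le> iid P xs"
  unfolding iid_def by (induction xs) auto

lemma sum_iid: fixes P :: "'a \<Rightarrow> real" shows "(\<Sum>xs\<in>words A n. iid P xs) = (\<Sum>a\<in>A. P a) ^ n"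
  by (simp add: iid_def sum_words_prod)

lemma words_len: "xs \<in> words A n \<Longrightarrow> length xs = n" by (simp add: words_def)

lemma null_elem_le:
  fixes PX :: "'x::finite \<Rightarrow> real" and T :: "('x \<times> 'y::finite) list \<Rightarrow> real"
    and Q :: "('x \<times> 'y) list \<Rightarrow> real"
  assumes "Q \<in> nullFamily PX n"
    and r: "\<And>ys. ys \<in> words (UNIV::'y set) n \<Longrightarrow> (\<Sum>xs\<in>words UNIV n. iid PX xs * (1 - T (zip xs ys))) \<le> r"
  shows "(\<Sum>z\<in>words UNIV n. Q z * (1 - T z)) \<le> r"
proof -
  obtain QYn where Q: "is_dist (words (UNIV::'y set) n) QYn"
    "Q = (\<lambda>zs. iid PX (map fst zs) * QYn (map snd zs))" using assms(1) by (auto simp: nullFamily_def)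
  have "(\<Sum>z\<in>words UNIV n. Q z * (1 - T z))
      = (\<Sum>ys\<in>words UNIV n. \<Sum>xs\<in>words UNIV n. Q (zip xs ys) * (1 - T (zip xs ys)))"
    using sum_words_pairs[where A="UNIV::'x set" and B="UNIV::'y set" and n=n and F="\<lambda>z. Q z * (1 - T z)"] by simp
  also have "\<dots> = (\<Sum>ys\<in>words UNIV n. QYn ys * (\<Sum>xs\<in>words UNIV n. iid PX xs * (1 - T (zip xs ys))))"
    by (intro sum.cong refl) (auto simp: Q(2) sum_distrib_left words_def ac_simps)
  also have "\<dots> \<le> (\<Sum>ys\<in>words UNIV n. QYn ys * r)"
    using Q(1) r by (intro sum_mono mult_left_mono) (auto simp: is_dist_def)
  also have "\<dots> = r" using Q(1) by (simp add: is_dist_def sum_distrib_right[symmetric])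
  finally show ?thesis .
qed

lemma typeI_null_le:
  fixes PX :: "'x::finite \<Rightarrow> real" and T :: "('x \<times> 'y::finite) list \<Rightarrow> real"
  assumes ne: "nullFamily PX n \<noteq> ({} :: (('x \<times> 'y) list \<Rightarrow> real) set)"
    and r: "\<And>ys. ys \<in> words (UNIV::'y set) n \<Longrightarrow> (\<Sum>xs\<in>words UNIV n. iid PX xs * (1 - T (zip xs ys))) \<le> r"
  shows "typeI (words UNIV n) (nullFamily PX n) T \<le> r"
  unfolding typeI_def
  by (rule cSUP_least[OF ne]) (rule null_elem_le[OF _ r])

lemma is_dist_iid: fixes Q :: "'a \<Rightarrow> real" assumes "is_dist A Q" "\<And>x. 0 \<le> Q x"
  shows "is_dist (words A n) (iid Q)"
  using assms by (auto simp: is_dist_def sum_iid iid_nonneg)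

lemma in_null:
  fixes Q :: "'y::finite \<Rightarrow> real"
  assumes "is_dist UNIV Q"
  shows "(\<lambda>zs. prod_list (map (\<lambda>(x,y). PX x * Q y) zs)) \<in> nullFamily PX n"
proof -
  have "is_dist (words (UNIV::'y set) n) (iid Q)"
    using assms by (intro is_dist_iid) (auto simp: is_dist_def)
  then show ?thesis unfolding nullFamily_def
    by (intro CollectI exI[of _ "iid Q"]) (simp add: iid_pair[symmetric])
qed

lemma null_ne: "nullFamily (PX :: 'x \<Rightarrow> real) n \<noteq> ({} :: (('x \<times> 'y::finite) list \<Rightarrow> real) set)"
proof -
  have "is_dist (UNIV::'y set) (\<lambda>_. 1 / real CARD('y))" by (simp add: is_dist_def)
  from in_null[OF this, of PX n] show ?thesis by blast
qed



lemma prod_list_pos: fixes f :: "'a \<Rightarrow> real" shows "(\<forall>z\<in>set zs. 0 < f z) \<Longrightarrow> 0 < prod_list (map f zs)"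
  by (induction zs) auto

lemma prod_list_nonneg': fixes f :: "'a \<Rightarrow> real" shows "(\<forall>z\<in>set zs. 0 \<le> f z) \<Longrightarrow> 0 \<le> prod_list (map f zs)"
  by (induction zs) auto

lemma prod_list_mono': fixes f g :: "'a \<Rightarrow> real"
  shows "(\<forall>z\<in>set zs. 0 \<le> f z \<and> f z \<le> g z) \<Longrightarrow> prod_list (map f zs) \<le> prod_list (map g zs)"
proof (induction zs)
  case (Cons a zs)
  then show ?case by (auto intro!: mult_mono prod_list_nonneg')
qed simp

lemma sum_ln_prod: fixes f :: "'a \<Rightarrow> real"
  shows "(\<forall>z\<in>set zs. 0 < f z) \<Longrightarrow> sum_list (map (\<lambda>z. ln (f z)) zs) = ln (prod_list (map f zs))"
proof (induction zs)
  case (Cons a zs)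
  then show ?case using prod_list_pos[of zs f] by (simp add: ln_mult)
qed simp

lemma prod_exp: fixes f :: "'a \<Rightarrow> real" shows "prod_list (map (\<lambda>z. exp (f z)) zs) = exp (sum_list (map f zs))"
  by (induction zs) (auto simp: exp_add)

lemma prod_div: fixes a b :: "'a \<Rightarrow> real"
  shows "prod_list (map (\<lambda>z. a z / b z) zs) = prod_list (map a zs) / prod_list (map b zs)"
  by (induction zs) auto

lemma chernoff_pt:
  fixes a b :: "'a \<Rightarrow> real"
  assumes pos: "\<forall>z\<in>set zs. 0 < a z \<and> 0 < b z" and s: "0 \<le> s"
    and gt: "exp c * prod_list (map b zs) < prod_list (map a zs)"
  shows "exp (s * c) \<le> prod_list (map (\<lambda>z. exp (s * ln (a z / b z))) zs)"
proof -
  have pa: "0 < prod_list (map a zs)" and pb: "0 < prod_list (map b zs)"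
    using pos by (auto intro!: prod_list_pos)
  have "sum_list (map (\<lambda>z. ln (a z / b z)) zs) = ln (prod_list (map (\<lambda>z. a z / b z) zs))"
    using pos by (intro sum_ln_prod) auto
  also have "\<dots> = ln (prod_list (map a zs) / prod_list (map b zs))" by (simp add: prod_div)
  finally have L: "sum_list (map (\<lambda>z. ln (a z / b z)) zs) = ln (prod_list (map a zs) / prod_list (map b zs))" .
  have "exp c < prod_list (map a zs) / prod_list (map b zs)" using gt pb by (simp add: field_simps)
  then have "c < ln (prod_list (map a zs) / prod_list (map b zs))"
    using pa pb by (metis divide_pos_pos exp_less_cancel_iff exp_ln)
  then have "s * c \<le> s * sum_list (map (\<lambda>z. ln (a z / b z)) zs)" using L s by (simp add: mult_left_mono)
  then have "exp (s * c) \<le> exp (s * sum_list (map (\<lambda>z. ln (a z / b z)) zs))" by simp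
  also have "\<dots> = prod_list (map (\<lambda>z. exp (s * ln (a z / b z))) zs)"
    by (simp add: prod_exp sum_list_const_mult)
  finally show ?thesis .
qed

lemma marg_nonneg: assumes "is_dist UNIV PXY" shows "0 \<le> marginalX PXY x"
  using assms by (auto simp: marginalX_def is_dist_def intro!: sum_nonneg)

lemma marg_sum: fixes PXY :: "'x::finite \<times> 'y::finite \<Rightarrow> real"
  assumes "is_dist UNIV PXY" shows "(\<Sum>x\<in>UNIV. marginalX PXY x) = 1"
proof -
  have "(\<Sum>x\<in>UNIV. marginalX PXY x) = (\<Sum>z\<in>UNIV \<times> UNIV. PXY z)"
    by (simp add: marginalX_def sum.cartesian_product)
  then show ?thesis using assms by (simp add: is_dist_def)
qed

lemma marg_ge: fixes PXY :: "'x::finite \<times> 'y::finite \<Rightarrow> real"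
  assumes "is_dist UNIV PXY" shows "PXY (x,y) \<le> marginalX PXY x"
  unfolding marginalX_def using assms
  by (intro member_le_sum[of y "UNIV" "\<lambda>y. PXY (x,y)", simplified]) (auto simp: is_dist_def)

lemma sum_pairs: fixes f :: "'x::finite \<Rightarrow> real" and g :: "'y::finite \<Rightarrow> real"
  shows "(\<Sum>z\<in>UNIV. (case z of (x,y) \<Rightarrow> f x * g y)) = (\<Sum>x\<in>UNIV. f x) * (\<Sum>y\<in>UNIV. g y)"
proof -
  have "(\<Sum>z\<in>UNIV. (case z of (x,y) \<Rightarrow> f x * g y)) = (\<Sum>z\<in>UNIV \<times> UNIV. (case z of (x,y) \<Rightarrow> f x * g y))"
    by simp
  also have "\<dots> = (\<Sum>x\<in>UNIV. f x) * (\<Sum>y\<in>UNIV. g y)"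
    using sum.cartesian_product[of "\<lambda>x y. f x * g y" UNIV UNIV] by (simp add: sum_product case_prod_unfold)
  finally show ?thesis .
qed

lemma exp_pow_lim: assumes "0 < a" "0 < e"
  shows "eventually (\<lambda>n. exp (- real n * a) \<le> e) sequentially"
proof -
  have "(\<lambda>n. exp (- a) ^ n) \<longlonglongrightarrow> 0" using assms by (intro LIMSEQ_power_zero) auto
  then have "eventually (\<lambda>n. exp (- a) ^ n < e) sequentially" using assms(2) by (rule order_tendstoD)
  then show ?thesis
    by eventually_elim (simp add: exp_of_nat_mult[symmetric] ac_simps)
qed



lemma mgf_bound:
  fixes w l :: "'z::finite \<Rightarrow> real"
  assumes w0: "\<And>z. 0 \<le> w z" and w1: "(\<Sum>z\<in>UNIV. w z) = 1"
    and M: "\<And>z. \<bar>l z\<bar> \<le> M" and s: "0 \<le> s" "s * M \<le> 1"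
  shows "(\<Sum>z\<in>UNIV. w z * exp (s * l z)) \<le> exp (s * (\<Sum>z\<in>UNIV. w z * l z) + s^2 * M^2)"
proof -
  have "(\<Sum>z\<in>UNIV. w z * exp (s * l z)) \<le> (\<Sum>z\<in>UNIV. w z * (1 + s * l z + (s * l z)^2))"
  proof (intro sum_mono mult_left_mono w0)
    fix z
    have "\<bar>s * l z\<bar> \<le> s * M" using M[of z] s by (simp add: abs_mult mult_left_mono)
    then show "exp (s * l z) \<le> 1 + s * l z + (s * l z)^2" using s by (intro exp_quad) auto
  qed
  also have "\<dots> = (\<Sum>z\<in>UNIV. w z) + s * (\<Sum>z\<in>UNIV. w z * l z) + s^2 * (\<Sum>z\<in>UNIV. w z * (l z)^2)"
    by (simp add: algebra_simps sum.distrib sum_distrib_left power_mult_distrib)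
  also have "(\<Sum>z\<in>UNIV. w z * (l z)^2) \<le> (\<Sum>z\<in>UNIV. w z * M^2)"
  proof (intro sum_mono mult_left_mono w0)
    fix z show "(l z)^2 \<le> M^2" using M[of z] by (metis abs_le_square_iff abs_of_nonneg abs_ge_zero order_trans)
  qed
  also have "(\<Sum>z\<in>UNIV. w z * M^2) = M^2" using w1 by (simp add: sum_distrib_right[symmetric])
  finally have "(\<Sum>z\<in>UNIV. w z * exp (s * l z)) \<le> 1 + (s * (\<Sum>z\<in>UNIV. w z * l z) + s^2 * M^2)"
    using w1 by (simp add: mult_left_mono)
  also have "\<dots> \<le> exp (s * (\<Sum>z\<in>UNIV. w z * l z) + s^2 * M^2)" by (rule exp_ge_add_one_self)
  finally show ?thesis .
qed

lemma converse:
  fixes PXY :: "'x::finite \<times> 'y::finite \<Rightarrow> real" and Q :: "'y \<Rightarrow> real"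
  assumes P: "is_dist UNIV PXY" and Qd: "is_dist UNIV Q" and eps: "0 < eps" "eps < 1"
    and K: "KL UNIV (\<lambda>(x,y). marginalX PXY x * Q y) PXY = ereal D" and \<delta>: "0 < \<delta>"
  shows "eventually (\<lambda>n. DH eps (words UNIV n) (nullFamily (marginalX PXY) n) (iid PXY)
            \<le> ereal (real n * (D + \<delta>) - ln ((1 - eps) / 2))) sequentially"
proof -
  define PX where "PX = marginalX PXY"
  define w where "w = (\<lambda>(x,y). PX x * Q y)"
  have PX0: "\<And>x. 0 \<le> PX x" using marg_nonneg[OF P] by (simp add: PX_def)
  have PX1: "(\<Sum>x\<in>UNIV. PX x) = 1" using marg_sum[OF P] by (simp add: PX_def)
  have Q0: "\<And>y. 0 \<le> Q y" and Q1: "(\<Sum>y\<in>UNIV. Q y) = 1" using Qd by (auto simp: is_dist_def)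
  have P0: "\<And>z. 0 \<le> PXY z" using P by (auto simp: is_dist_def)
  have w0: "\<And>z. 0 \<le> w z" using PX0 Q0 by (auto simp: w_def)
  have w1: "(\<Sum>z\<in>UNIV. w z) = 1" unfolding w_def using sum_pairs[of PX Q] PX1 Q1 by simp
  have ac: "\<And>z. w z \<noteq> 0 \<Longrightarrow> PXY z \<noteq> 0"
  proof -
    fix z assume "w z \<noteq> 0"
    moreover have "\<not> (\<exists>x\<in>UNIV. w x \<noteq> 0 \<and> PXY x = 0)"
    proof
      assume "\<exists>x\<in>UNIV. w x \<noteq> 0 \<and> PXY x = 0"
      then have "KL UNIV w PXY = \<infinity>" by (simp add: KL_def)
      then show False using K by (simp add: w_def PX_def)
    qed
    ultimately show "PXY z \<noteq> 0" by blast
  qed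
  define l where "l = (\<lambda>z. ln (w z / PXY z))"
  have Dsum: "D = (\<Sum>z\<in>UNIV. w z * l z)"
  proof -
    have "KL UNIV w PXY = ereal (\<Sum>z\<in>UNIV. if w z = 0 then 0 else w z * ln (w z / PXY z))"
      using ac by (auto simp: KL_def)
    moreover have "KL UNIV w PXY = ereal D" using K by (simp add: w_def PX_def)
    ultimately show ?thesis by (auto simp: l_def intro!: sum.cong)
  qed
  define M where "M = 1 + (\<Sum>z\<in>UNIV. \<bar>l z\<bar>)"
  have Ml: "\<And>z. \<bar>l z\<bar> \<le> M"
  proof -
    fix z
    have "\<bar>l z\<bar> \<le> (\<Sum>z\<in>UNIV. \<bar>l z\<bar>)" by (rule member_le_sum) auto
    then show "\<bar>l z\<bar> \<le> M" by (simp add: M_def)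
  qed
  have M1: "1 \<le> M" unfolding M_def by (simp add: sum_nonneg)
  define s where "s = min (1 / M) (\<delta> / (2 * M^2))"
  have s0: "0 < s" using M1 \<delta> by (simp add: s_def)
  have sM: "s * M \<le> 1"
  proof -
    have "s \<le> 1 / M" by (simp add: s_def)
    then have "s * M \<le> 1 / M * M" using M1 by (intro mult_right_mono) auto
    then show ?thesis using M1 by simp
  qed
  have sM2: "s^2 * M^2 \<le> s * \<delta> / 2"
  proof -
    have "s \<le> \<delta> / (2 * M^2)" by (simp add: s_def)
    then have "s * M^2 \<le> \<delta> / (2 * M^2) * M^2" using M1 by (intro mult_right_mono) auto
    then have "s * M^2 \<le> \<delta> / 2" using M1 by simp
    then have "s * (s * M^2) \<le> s * (\<delta> / 2)" using s0 by (intro mult_left_mono) auto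
    then show ?thesis by (simp add: power2_eq_square ac_simps)
  qed
  define phi where "phi = (\<lambda>z. w z * exp (s * l z))"
  have phi0: "\<And>z. 0 \<le> phi z" using w0 by (simp add: phi_def)
  have mgf: "(\<Sum>z\<in>UNIV. phi z) \<le> exp (s * D + s^2 * M^2)"
    unfolding phi_def Dsum using mgf_bound[OF w0 w1 Ml less_imp_le[OF s0] sM] .
  have ev: "eventually (\<lambda>n. exp (- real n * (s * \<delta> / 2)) \<le> (1 - eps) / 2) sequentially"
    using s0 \<delta> eps by (intro exp_pow_lim) auto
  show ?thesis
    using ev
  proof eventually_elim
    fix n assume n: "exp (- real n * (s * \<delta> / 2)) \<le> (1 - eps) / 2"
    define c where "c = real n * (D + \<delta>)"
    define A where "A = words (UNIV :: ('x \<times> 'y) set) n"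
    define W where "W = (\<lambda>zs. prod_list (map w zs))"
    have WN: "W \<in> nullFamily PX n" unfolding W_def w_def by (rule in_null[OF Qd])
    have W0: "\<And>zs. 0 \<le> W zs" using w0 by (simp add: W_def prod_list_nonneg')
    have W1: "(\<Sum>zs\<in>A. W zs) = 1" by (simp add: A_def W_def sum_words_prod w1)
    have ind: "(if W zs > exp c * iid PXY zs then W zs else 0) \<le> exp (- (s * c)) * prod_list (map phi zs)" for zs
    proof (cases "W zs > exp c * iid PXY zs")
      case True
      have "exp c * iid PXY zs \<ge> 0" using P0 by (simp add: iid_nonneg)
      then have "W zs \<noteq> 0" using True by linarith
      then have "\<forall>z\<in>set zs. w z \<noteq> 0" unfolding W_def by (auto simp: prod_list_zero_iff)
      then have wpos: "\<forall>z\<in>set zs. 0 < w z" using w0 by (auto simp: less_le)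
      then have pos: "\<forall>z\<in>set zs. 0 < w z \<and> 0 < PXY z" using ac P0 by (auto simp: less_le)
      have "exp (s * c) \<le> prod_list (map (\<lambda>z. exp (s * ln (w z / PXY z))) zs)"
        using chernoff_pt[OF pos less_imp_le[OF s0], of c] True by (simp add: W_def iid_def)
      then have "W zs * exp (s * c) \<le> W zs * prod_list (map (\<lambda>z. exp (s * l z)) zs)"
        using W0 by (intro mult_left_mono) (auto simp: l_def)
      also have "\<dots> = prod_list (map phi zs)" by (simp add: phi_def W_def prod_list_mult)
      finally have "W zs * exp (s * c) \<le> prod_list (map phi zs)" .
      then have "W zs \<le> exp (- (s * c)) * prod_list (map phi zs)"
        by (simp add: exp_minus field_simps)
      then show ?thesis using True by simp
    next
      case False then show ?thesis using phi0 by (simp add: prod_list_nonneg')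
    qed
    have sumind: "(\<Sum>zs\<in>A. if W zs > exp c * iid PXY zs then W zs else 0) \<le> (1 - eps) / 2"
    proof -
      have "(\<Sum>zs\<in>A. if W zs > exp c * iid PXY zs then W zs else 0)
          \<le> (\<Sum>zs\<in>A. exp (- (s * c)) * prod_list (map phi zs))" by (intro sum_mono ind)
      also have "\<dots> = exp (- (s * c)) * (\<Sum>z\<in>UNIV. phi z) ^ n"
        by (simp add: A_def sum_distrib_left[symmetric] sum_words_prod)
      also have "\<dots> \<le> exp (- (s * c)) * exp (s * D + s^2 * M^2) ^ n"
        by (intro mult_left_mono power_mono mgf) (auto intro: sum_nonneg phi0)
      also have "\<dots> = exp (real n * (- (s * \<delta>) + s^2 * M^2))"
        by (simp add: c_def exp_of_nat_mult[symmetric] exp_add[symmetric] algebra_simps)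
      also have "\<dots> \<le> exp (- real n * (s * \<delta> / 2))"
      proof -
        have "real n * (- (s * \<delta>) + s^2 * M^2) \<le> real n * (- (s * \<delta> / 2))"
          using sM2 by (intro mult_left_mono) auto
        then show ?thesis by simp
      qed
      finally show ?thesis using n by linarith
    qed
    have lower: "exp (- c) * ((1 - eps) / 2) \<le> typeII A (iid PXY) T"
      if T: "T \<in> tests A" and TI: "typeI A (nullFamily PX n) T \<le> eps" for T
    proof -
      have T01: "\<And>zs. zs \<in> A \<Longrightarrow> 0 \<le> T zs \<and> T zs \<le> 1" using T by (auto simp: tests_def)
      have bdd: "bdd_above ((\<lambda>Q. \<Sum>z\<in>A. Q z * (1 - T z)) ` nullFamily PX n)"
      proof (rule bdd_aboveI2)
        fix Q :: "('x \<times> 'y) list \<Rightarrow> real" assume "Q \<in> nullFamily PX n"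
        then show "(\<Sum>z\<in>A. Q z * (1 - T z)) \<le> 1" unfolding A_def
        proof (rule null_elem_le)
          fix ys :: "'y list" assume ys: "ys \<in> words UNIV n"
          have "(\<Sum>xs\<in>words UNIV n. iid PX xs * (1 - T (zip xs ys))) \<le> (\<Sum>xs\<in>words UNIV n. iid PX xs)"
          proof (intro sum_mono)
            fix xs :: "'x list" assume xs: "xs \<in> words UNIV n"
            have "zip xs ys \<in> A" using xs ys by (auto simp: A_def words_def)
            then show "iid PX xs * (1 - T (zip xs ys)) \<le> iid PX xs"
              using T01 iid_nonneg[of PX xs, OF PX0] by (simp add: mult_left_le)
          qed
          also have "\<dots> = 1" by (simp add: sum_iid PX1)
          finally show "(\<Sum>xs\<in>words UNIV n. iid PX xs * (1 - T (zip xs ys))) \<le> 1" .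
        qed
      qed
      have "(\<Sum>zs\<in>A. W zs * (1 - T zs)) \<le> typeI A (nullFamily PX n) T"
        unfolding typeI_def using cSUP_upper[OF WN bdd] .
      then have WT: "1 - eps \<le> (\<Sum>zs\<in>A. W zs * T zs)"
        using TI W1 by (simp add: algebra_simps sum_subtractf)
      have pt: "exp (- c) * (W zs * T zs - (if W zs > exp c * iid PXY zs then W zs else 0))
            \<le> iid PXY zs * T zs" if zs: "zs \<in> A" for zs
      proof (cases "W zs > exp c * iid PXY zs")
        case True
        have "W zs * T zs - W zs \<le> 0" using T01[OF zs] W0[of zs] by (simp add: mult_left_le)
        then have "exp (- c) * (W zs * T zs - W zs) \<le> 0" by (simp add: mult_nonneg_nonpos)
        moreover have "0 \<le> iid PXY zs * T zs" using T01[OF zs] iid_nonneg[of PXY zs, OF P0] by simp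
        ultimately show ?thesis using True by simp
      next
        case False
        then have "W zs * T zs \<le> exp c * iid PXY zs * T zs" using T01[OF zs] by (simp add: mult_right_mono)
        then have "exp (- c) * (W zs * T zs) \<le> iid PXY zs * T zs"
          by (simp add: exp_minus field_simps)
        then show ?thesis using False by simp
      qed
      have "exp (- c) * ((1 - eps) / 2) \<le> exp (- c) * ((\<Sum>zs\<in>A. W zs * T zs) - (\<Sum>zs\<in>A. if W zs > exp c * iid PXY zs then W zs else 0))"
        using WT sumind by (intro mult_left_mono) auto
      also have "\<dots> = (\<Sum>zs\<in>A. exp (- c) * (W zs * T zs - (if W zs > exp c * iid PXY zs then W zs else 0)))"
        by (simp only: sum_distrib_left[symmetric] sum_subtractf)
      also have "\<dots> \<le> (\<Sum>zs\<in>A. iid PXY zs * T zs)" by (intro sum_mono pt)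
      finally show ?thesis by (simp add: typeII_def)
    qed
    have T1: "(\<lambda>_. 1) \<in> tests A" by (simp add: tests_def)
    have TI1: "typeI A (nullFamily PX n) (\<lambda>_. 1) \<le> eps"
      unfolding A_def using eps by (intro typeI_null_le[OF null_ne]) auto
    have cpos: "0 < exp (- c) * ((1 - eps) / 2)" using eps by simp
    have "DH eps A (nullFamily PX n) (iid PXY) \<le> ereal (- ln (exp (- c) * ((1 - eps) / 2)))"
      by (rule DH_le[OF T1 TI1 lower cpos])
    also have "- ln (exp (- c) * ((1 - eps) / 2)) = c - ln ((1 - eps) / 2)"
      using eps ln_mult[of "exp (- c)" "(1 - eps) / 2"] by simp
    finally show "DH eps (words UNIV n) (nullFamily (marginalX PXY) n) (iid PXY)
            \<le> ereal (real n * (D + \<delta>) - ln ((1 - eps) / 2))"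
      by (simp add: A_def PX_def c_def)
  qed
qed



definition Gt :: "('x::finite \<times> 'y::finite \<Rightarrow> real) \<Rightarrow> real \<Rightarrow> 'y \<Rightarrow> real" where
  "Gt PXY \<tau> y = exp (\<Sum>x\<in>UNIV. marginalX PXY x * ln (max (PXY (x,y)) \<tau> / marginalX PXY x))"

lemma prod_list_const: fixes c :: real shows "prod_list (map (\<lambda>_. c) xs) = c ^ length xs"
  by (induction xs) auto

lemma iid_zip: "length xs = length ys \<Longrightarrow> iid f xs = prod_list (map (\<lambda>(x,y). f x) (zip xs ys))"
proof (induction xs arbitrary: ys)
  case (Cons a xs) then show ?case by (cases ys) (auto simp: iid_def)
qed (simp add: iid_def)

lemma achiev:
  fixes PXY :: "'x::finite \<times> 'y::finite \<Rightarrow> real"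
  assumes P: "is_dist UNIV PXY" and eps: "0 < eps" and \<tau>: "0 < \<tau>" and \<delta>: "0 < \<delta>"
  shows "eventually (\<lambda>n. ereal (real n * (- \<delta> - ln (\<Sum>y\<in>UNIV. Gt PXY \<tau> y)))
            \<le> DH eps (words UNIV n) (nullFamily (marginalX PXY) n) (iid PXY)) sequentially"
proof -
  define PX where "PX = marginalX PXY"
  define G where "G = Gt PXY \<tau>"
  have PX0: "\<And>x. 0 \<le> PX x" using marg_nonneg[OF P] by (simp add: PX_def)
  have PX1: "(\<Sum>x\<in>UNIV. PX x) = 1" using marg_sum[OF P] by (simp add: PX_def)
  have P0: "\<And>z. 0 \<le> PXY z" using P by (auto simp: is_dist_def)
  have G0: "\<And>y. 0 < G y" by (simp add: G_def Gt_def)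
  have lnG: "\<And>y. ln (G y) = (\<Sum>x\<in>UNIV. PX x * ln (max (PXY (x,y)) \<tau> / PX x))"
    by (simp add: G_def Gt_def PX_def)
  define h where "h = (\<lambda>x y. ln (max (PXY (x,y)) \<tau> / (G y * PX x)))"
  have hsum: "(\<Sum>x\<in>UNIV. PX x * h x y) = 0" for y
  proof -
    have "(\<Sum>x\<in>UNIV. PX x * h x y) = (\<Sum>x\<in>UNIV. PX x * ln (max (PXY (x,y)) \<tau> / PX x) - PX x * ln (G y))"
    proof (intro sum.cong refl)
      fix x
      show "PX x * h x y = PX x * ln (max (PXY (x,y)) \<tau> / PX x) - PX x * ln (G y)"
      proof (cases "PX x = 0")
        case False
        then have "0 < PX x" using PX0[of x] by linarith
        moreover have "0 < max (PXY (x,y)) \<tau>" using \<tau> by simp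
        ultimately have "h x y = ln (max (PXY (x,y)) \<tau> / PX x) - ln (G y)"
          using G0[of y] by (simp add: h_def ln_div ln_mult)
        then show ?thesis by (simp add: right_diff_distrib)
      qed simp
    qed
    also have "\<dots> = (\<Sum>x\<in>UNIV. PX x * ln (max (PXY (x,y)) \<tau> / PX x)) - (\<Sum>x\<in>UNIV. PX x) * ln (G y)"
      by (simp only: sum_subtractf sum_distrib_right)
    also have "\<dots> = 0" using PX1 lnG[of y] by simp
    finally show ?thesis .
  qed
  define M where "M = 1 + (\<Sum>z\<in>UNIV. \<bar>case z of (x,y) \<Rightarrow> h x y\<bar>)"
  have Mh: "\<bar>h x y\<bar> \<le> M" for x y
  proof -
    have "\<bar>case (x,y) of (x,y) \<Rightarrow> h x y\<bar> \<le> (\<Sum>z\<in>UNIV. \<bar>case z of (x,y) \<Rightarrow> h x y\<bar>)"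
      by (rule member_le_sum) auto
    then show ?thesis by (simp add: M_def)
  qed
  have M1: "1 \<le> M" unfolding M_def by (simp add: sum_nonneg)
  define s where "s = min (1 / M) (\<delta> / (2 * M^2))"
  have s0: "0 < s" using M1 \<delta> by (simp add: s_def)
  have sM: "s * M \<le> 1"
  proof -
    have "s \<le> 1 / M" by (simp add: s_def)
    then have "s * M \<le> 1 / M * M" using M1 by (intro mult_right_mono) auto
    then show ?thesis using M1 by simp
  qed
  have sM2: "s^2 * M^2 \<le> s * \<delta> / 2"
  proof -
    have "s \<le> \<delta> / (2 * M^2)" by (simp add: s_def)
    then have "s * M^2 \<le> \<delta> / (2 * M^2) * M^2" using M1 by (intro mult_right_mono) auto
    then have "s * M^2 \<le> \<delta> / 2" using M1 by simp
    then have "s * (s * M^2) \<le> s * (\<delta> / 2)" using s0 by (intro mult_left_mono) auto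
    then show ?thesis by (simp add: power2_eq_square ac_simps)
  qed
  define phi where "phi = (\<lambda>(x,y). PX x * exp (s * h x y) * exp (- (s * \<delta>)))"
  have phi0: "\<And>z. 0 \<le> phi z" using PX0 by (auto simp: phi_def)
  have phisum: "(\<Sum>x\<in>UNIV. phi (x,y)) \<le> exp (- (s * \<delta> / 2))" for y
  proof -
    have "(\<Sum>x\<in>UNIV. PX x * exp (s * h x y)) \<le> exp (s * (\<Sum>x\<in>UNIV. PX x * h x y) + s^2 * M^2)"
      using mgf_bound[OF PX0 PX1, of "\<lambda>x. h x y" M s] Mh s0 sM by auto
    also have "\<dots> = exp (s^2 * M^2)" by (simp add: hsum)
    finally have "(\<Sum>x\<in>UNIV. phi (x,y)) \<le> exp (s^2 * M^2) * exp (- (s * \<delta>))"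
      by (simp add: phi_def sum_distrib_right[symmetric])
    also have "\<dots> = exp (s^2 * M^2 - s * \<delta>)" by (simp add: exp_add[symmetric])
    also have "\<dots> \<le> exp (- (s * \<delta> / 2))" using sM2 by simp
    finally show ?thesis .
  qed
  have ev: "eventually (\<lambda>n. exp (- real n * (s * \<delta> / 2)) \<le> eps) sequentially"
    using s0 \<delta> eps by (intro exp_pow_lim) auto
  show ?thesis
    using ev
  proof eventually_elim
    fix n assume n: "exp (- real n * (s * \<delta> / 2)) \<le> eps"
    define A where "A = words (UNIV :: ('x \<times> 'y) set) n"
    define a where "a = (\<lambda>(x,y). max (PXY (x,y)) \<tau>)"
    define b where "b = (\<lambda>(x,y). PX x * G y)"
    define T where "T = (\<lambda>zs. if prod_list (map a zs) \<le> exp (real n * \<delta>) * prod_list (map b zs) then 1 else (0::real))"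
    have T: "T \<in> tests A" by (simp add: T_def tests_def)
    have typeI: "typeI A (nullFamily PX n) T \<le> eps"
      unfolding A_def
    proof (rule typeI_null_le[OF null_ne])
      fix ys :: "'y list" assume ys: "ys \<in> words UNIV n"
      then have ly: "length ys = n" by (simp add: words_def)
      have pt: "iid PX xs * (1 - T (zip xs ys)) \<le> prod_list (map phi (zip xs ys))"
        if xs: "xs \<in> words UNIV n" for xs
      proof -
        have lx: "length xs = length ys" using xs ly by (simp add: words_def)
        have iz: "iid PX xs = prod_list (map (\<lambda>(x,y). PX x) (zip xs ys))" by (rule iid_zip[OF lx])
        have ph0: "0 \<le> prod_list (map phi (zip xs ys))" using phi0 by (simp add: prod_list_nonneg')
        show ?thesis
        proof (cases "T (zip xs ys) = 1")
          case True then show ?thesis using ph0 by simp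
        next
          case False
          then have T0: "T (zip xs ys) = 0" by (simp add: T_def split: if_splits)
          then have gt: "exp (real n * \<delta>) * prod_list (map b (zip xs ys)) < prod_list (map a (zip xs ys))"
            using False by (simp add: T_def split: if_splits)
          show ?thesis
          proof (cases "\<forall>z\<in>set (zip xs ys). 0 < PX (fst z)")
            case False
            then obtain x y where "(x,y) \<in> set (zip xs ys)" "PX x = 0" using PX0 by (force simp: less_le)
            then have "iid PX xs = 0" unfolding iz by (force simp: prod_list_zero_iff image_iff)
            then show ?thesis using ph0 by simp
          next
            case True
            have pos: "\<forall>z\<in>set (zip xs ys). 0 < a z \<and> 0 < b z"
              using True G0 \<tau> by (auto simp: a_def b_def)
            have "exp (s * (real n * \<delta>)) \<le> prod_list (map (\<lambda>z. exp (s * ln (a z / b z))) (zip xs ys))"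
              by (rule chernoff_pt[OF pos less_imp_le[OF s0] gt])
            also have "\<dots> = prod_list (map (\<lambda>(x,y). exp (s * h x y)) (zip xs ys))"
              by (intro arg_cong[where f=prod_list] map_cong refl) (auto simp: a_def b_def h_def ac_simps)
            finally have E1: "exp (s * (real n * \<delta>)) \<le> prod_list (map (\<lambda>(x,y). exp (s * h x y)) (zip xs ys))" .
            have "prod_list (map phi (zip xs ys)) = iid PX xs * prod_list (map (\<lambda>(x,y). exp (s * h x y)) (zip xs ys))
                 * prod_list (map (\<lambda>z. exp (- (s * \<delta>))) (zip xs ys))"
              unfolding iz phi_def prod_list_mult[symmetric] by (simp add: case_prod_unfold)
            also have "prod_list (map (\<lambda>z. exp (- (s * \<delta>))) (zip xs ys)) = exp (- (s * \<delta>)) ^ n"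
              using lx ly by (simp add: prod_list_const)
            also have "\<dots> = exp (- (s * (real n * \<delta>)))" by (simp add: exp_of_nat_mult[symmetric] ac_simps)
            finally have E2: "prod_list (map phi (zip xs ys)) = iid PX xs * prod_list (map (\<lambda>(x,y). exp (s * h x y)) (zip xs ys)) * exp (- (s * (real n * \<delta>)))" .
            have ip: "0 \<le> iid PX xs" using PX0 by (simp add: iid_nonneg)
            have "iid PX xs * exp (s * (real n * \<delta>)) \<le> iid PX xs * prod_list (map (\<lambda>(x,y). exp (s * h x y)) (zip xs ys))"
              using E1 ip by (rule mult_left_mono)
            then have "iid PX xs \<le> prod_list (map phi (zip xs ys))"
              unfolding E2 by (simp add: exp_minus field_simps)
            then show ?thesis using T0 by simp
          qed
        qed
      qed
      have "(\<Sum>xs\<in>words UNIV n. iid PX xs * (1 - T (zip xs ys))) \<le> (\<Sum>xs\<in>words UNIV n. prod_list (map phi (zip xs ys)))"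
        by (intro sum_mono pt)
      also have "\<dots> = prod_list (map (\<lambda>y. \<Sum>x\<in>UNIV. phi (x,y)) ys)"
        using sum_words_zip[where f=phi and A=UNIV and ys=ys] ly by simp
      also have "\<dots> \<le> prod_list (map (\<lambda>y. exp (- (s * \<delta> / 2))) ys)"
        using phisum phi0 by (intro prod_list_mono') (auto intro: sum_nonneg)
      also have "\<dots> = exp (- real n * (s * \<delta> / 2))"
        using ly by (simp add: prod_list_const exp_of_nat_mult[symmetric] ac_simps)
      also have "\<dots> \<le> eps" by (rule n)
      finally show "(\<Sum>xs\<in>words UNIV n. iid PX xs * (1 - T (zip xs ys))) \<le> eps" .
    qed
    have typeII: "typeII A (iid PXY) T \<le> exp (real n * \<delta>) * (\<Sum>y\<in>UNIV. G y) ^ n"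
    proof -
      have "typeII A (iid PXY) T \<le> (\<Sum>zs\<in>A. exp (real n * \<delta>) * prod_list (map b zs))"
        unfolding typeII_def
      proof (intro sum_mono)
        fix zs
        have b0: "0 \<le> prod_list (map b zs)" using PX0 G0 by (intro prod_list_nonneg') (auto simp: b_def less_imp_le)
        show "iid PXY zs * T zs \<le> exp (real n * \<delta>) * prod_list (map b zs)"
        proof (cases "prod_list (map a zs) \<le> exp (real n * \<delta>) * prod_list (map b zs)")
          case True
          have "iid PXY zs \<le> prod_list (map a zs)" unfolding iid_def
            using P0 by (intro prod_list_mono') (auto simp: a_def)
          then show ?thesis using True by (simp add: T_def)
        next
          case False then show ?thesis using b0 by (simp add: T_def)
        qed
      qed
      also have "\<dots> = exp (real n * \<delta>) * (\<Sum>z\<in>UNIV. b z) ^ n"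
        by (simp add: A_def sum_distrib_left[symmetric] sum_words_prod)
      also have "(\<Sum>z\<in>UNIV. b z) = (\<Sum>y\<in>UNIV. G y)"
        unfolding b_def using sum_pairs[of PX G] PX1 by simp
      finally show ?thesis .
    qed
    have Gs: "0 < (\<Sum>y\<in>UNIV. G y)" using G0 by (intro sum_pos) auto
    have bpos: "0 < exp (real n * \<delta>) * (\<Sum>y\<in>UNIV. G y) ^ n" using Gs by simp
    have "ereal (- ln (exp (real n * \<delta>) * (\<Sum>y\<in>UNIV. G y) ^ n)) \<le> DH eps A (nullFamily PX n) (iid PXY)"
      by (rule DH_ge[OF T typeI typeII bpos]) (simp add: iid_nonneg P0)
    moreover have "- ln (exp (real n * \<delta>) * (\<Sum>y\<in>UNIV. G y) ^ n) = real n * (- \<delta> - ln (\<Sum>y\<in>UNIV. G y))"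
      using Gs by (simp add: ln_mult ln_realpow algebra_simps)
    ultimately show "ereal (real n * (- \<delta> - ln (\<Sum>y\<in>UNIV. Gt PXY \<tau> y))) \<le> DH eps (words UNIV n) (nullFamily (marginalX PXY) n) (iid PXY)"
      by (simp add: A_def PX_def G_def)
  qed
qed



definition G0 :: "('x::finite \<times> 'y::finite \<Rightarrow> real) \<Rightarrow> 'y \<Rightarrow> real" where
  "G0 PXY y = (\<Prod>x\<in>UNIV. if marginalX PXY x = 0 then 1 else if PXY (x,y) = 0 then 0
      else exp (marginalX PXY x * ln (PXY (x,y) / marginalX PXY x)))"

lemma lim_aux: assumes "0 < p" shows "((\<lambda>t::real. exp (p * ln (t / p))) \<longlongrightarrow> 0) (at_right 0)"
  using assms by real_asymp

lemma Glim:
  fixes PXY :: "'x::finite \<times> 'y::finite \<Rightarrow> real"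
  assumes P: "is_dist UNIV PXY"
  shows "((\<lambda>\<tau>. \<Sum>y\<in>UNIV. Gt PXY \<tau> y) \<longlongrightarrow> (\<Sum>y\<in>UNIV. G0 PXY y)) (at_right 0)"
proof -
  define PX where "PX = marginalX PXY"
  have PX0: "\<And>x. 0 \<le> PX x" using marg_nonneg[OF P] by (simp add: PX_def)
  have P0: "\<And>z. 0 \<le> PXY z" using P by (auto simp: is_dist_def)
  have eq: "Gt PXY \<tau> y = (\<Prod>x\<in>UNIV. exp (PX x * ln (max (PXY (x,y)) \<tau> / PX x)))" for \<tau> y
    by (simp add: Gt_def PX_def exp_sum)
  show ?thesis unfolding eq G0_def PX_def[symmetric]
  proof (intro tendsto_sum tendsto_prod)
    fix y x
    show "((\<lambda>\<tau>. exp (PX x * ln (max (PXY (x, y)) \<tau> / PX x))) \<longlongrightarrow>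
       (if PX x = 0 then 1 else if PXY (x, y) = 0 then 0 else exp (PX x * ln (PXY (x, y) / PX x)))) (at_right 0)"
    proof (cases "PX x = 0")
      case True then show ?thesis by simp
    next
      case False
      then have px: "0 < PX x" using PX0[of x] by linarith
      show ?thesis
      proof (cases "PXY (x,y) = 0")
        case True
        have ev: "eventually (\<lambda>\<tau>. exp (PX x * ln (\<tau> / PX x)) = exp (PX x * ln (max (PXY (x, y)) \<tau> / PX x))) (at_right 0)"
          using True by (auto simp: eventually_at_right_field intro!: exI[of _ 1])
        show ?thesis using False True Lim_transform_eventually[OF lim_aux[OF px] ev] by simp
      next
        case False2: False
        then have pp: "0 < PXY (x,y)" using P0[of "(x,y)"] by linarith
        have ev: "eventually (\<lambda>\<tau>. exp (PX x * ln (PXY (x, y) / PX x)) = exp (PX x * ln (max (PXY (x, y)) \<tau> / PX x))) (at_right 0)"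
          using pp by (auto simp: eventually_at_right_field intro!: exI[of _ "PXY (x,y)"])
        show ?thesis using False False2 Lim_transform_eventually[OF tendsto_const ev] by simp
      qed
    qed
  qed
qed



lemma G0_facts:
  fixes PXY :: "'x::finite \<times> 'y::finite \<Rightarrow> real"
  assumes "G0 PXY y \<noteq> 0"
  shows "\<And>x. marginalX PXY x \<noteq> 0 \<Longrightarrow> PXY (x,y) \<noteq> 0"
    and "G0 PXY y = exp (\<Sum>x\<in>UNIV. marginalX PXY x * ln (PXY (x,y) / marginalX PXY x))"
proof -
  have nz: "\<And>x. (if marginalX PXY x = 0 then 1 else if PXY (x,y) = 0 then 0
      else exp (marginalX PXY x * ln (PXY (x,y) / marginalX PXY x))) \<noteq> 0"
    using assms unfolding G0_def by (simp add: prod_zero_iff)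
  show "\<And>x. marginalX PXY x \<noteq> 0 \<Longrightarrow> PXY (x,y) \<noteq> 0" 
  proof -
    fix x assume a: "marginalX PXY x \<noteq> 0"
    show "PXY (x,y) \<noteq> 0" using nz[of x] a by (auto split: if_splits)
  qed
  have "(if marginalX PXY x = 0 then 1 else if PXY (x,y) = 0 then 0
      else exp (marginalX PXY x * ln (PXY (x,y) / marginalX PXY x))) = exp (marginalX PXY x * ln (PXY (x,y) / marginalX PXY x))" for x
    using nz[of x] by (auto split: if_splits)
  then show "G0 PXY y = exp (\<Sum>x\<in>UNIV. marginalX PXY x * ln (PXY (x,y) / marginalX PXY x))"
    unfolding G0_def by (simp add: exp_sum)
qed

lemma G0_nonneg: "0 \<le> G0 PXY y"
  unfolding G0_def by (intro prod_nonneg) auto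

lemma umlaut_le:
  fixes PXY :: "'x::finite \<times> 'y::finite \<Rightarrow> real"
  assumes P: "is_dist UNIV PXY" and S: "0 < (\<Sum>y\<in>UNIV. G0 PXY y)"
  shows "umlaut PXY \<le> ereal (- ln (\<Sum>y\<in>UNIV. G0 PXY y))"
proof -
  define PX where "PX = marginalX PXY"
  define S where "S = (\<Sum>y\<in>UNIV. G0 PXY y)"
  define Q where "Q = (\<lambda>y. G0 PXY y / S)"
  have S0: "0 < S" using S by (simp add: S_def)
  have PX0: "\<And>x. 0 \<le> PX x" using marg_nonneg[OF P] by (simp add: PX_def)
  have PX1: "(\<Sum>x\<in>UNIV. PX x) = 1" using marg_sum[OF P] by (simp add: PX_def)
  have P0: "\<And>z. 0 \<le> PXY z" using P by (auto simp: is_dist_def)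
  have Qd: "is_dist UNIV Q" using S0
    by (auto simp: is_dist_def Q_def G0_nonneg sum_divide_distrib[symmetric] S_def)
  define w where "w = (\<lambda>(x,y). PX x * Q y)"
  have ac: "\<not> (\<exists>z\<in>UNIV. w z \<noteq> 0 \<and> PXY z = 0)"
  proof
    assume "\<exists>z\<in>UNIV. w z \<noteq> 0 \<and> PXY z = 0"
    then obtain x y where "PX x \<noteq> 0" "Q y \<noteq> 0" "PXY (x,y) = 0" by (auto simp: w_def)
    moreover from \<open>Q y \<noteq> 0\<close> have "G0 PXY y \<noteq> 0" by (simp add: Q_def)
    ultimately show False using G0_facts(1)[of PXY y x] by (simp add: PX_def)
  qed
  have inner: "(\<Sum>x\<in>UNIV. if w (x,y) = 0 then 0 else w (x,y) * ln (w (x,y) / PXY (x,y))) = - Q y * ln S" for y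
  proof (cases "Q y = 0")
    case True then show ?thesis by (simp add: w_def)
  next
    case False
    then have Gy: "G0 PXY y \<noteq> 0" by (simp add: Q_def)
    then have Gp: "0 < G0 PXY y" using G0_nonneg[of PXY y] by linarith
    have Qp: "0 < Q y" using Gp S0 by (simp add: Q_def)
    have lnG: "ln (G0 PXY y) = (\<Sum>x\<in>UNIV. PX x * ln (PXY (x,y) / PX x))"
      using G0_facts(2)[OF Gy] by (simp add: PX_def)
    have "(\<Sum>x\<in>UNIV. if w (x,y) = 0 then 0 else w (x,y) * ln (w (x,y) / PXY (x,y)))
        = (\<Sum>x\<in>UNIV. Q y * (PX x * ln (Q y) - PX x * ln (PXY (x,y) / PX x)))"
    proof (intro sum.cong refl)
      fix x show "(if w (x,y) = 0 then 0 else w (x,y) * ln (w (x,y) / PXY (x,y)))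
        = Q y * (PX x * ln (Q y) - PX x * ln (PXY (x,y) / PX x))"
      proof (cases "PX x = 0")
        case True then show ?thesis by (simp add: w_def)
      next
        case False
        then have px: "0 < PX x" using PX0[of x] by linarith
        have "PXY (x,y) \<noteq> 0" using G0_facts(1)[OF Gy] False by (simp add: PX_def)
        then have pp: "0 < PXY (x,y)" using P0[of "(x,y)"] by linarith
        have L: "ln (PX x * Q y / PXY (x,y)) = ln (Q y) - ln (PXY (x,y) / PX x)"
          using px pp Qp by (simp add: ln_div ln_mult)
        have "w (x,y) * ln (w (x,y) / PXY (x,y)) = PX x * Q y * (ln (Q y) - ln (PXY (x,y) / PX x))"
          by (simp only: w_def case_prod_conv L)
        then have "w (x,y) * ln (w (x,y) / PXY (x,y)) = Q y * (PX x * ln (Q y) - PX x * ln (PXY (x,y) / PX x))"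
          by (simp add: algebra_simps)
        then show ?thesis using px Qp by (simp add: w_def)
      qed
    qed
    also have "\<dots> = Q y * ((\<Sum>x\<in>UNIV. PX x) * ln (Q y) - (\<Sum>x\<in>UNIV. PX x * ln (PXY (x,y) / PX x)))"
      by (simp only: sum_distrib_left[symmetric] sum_subtractf sum_distrib_right)
    also have "\<dots> = Q y * (ln (Q y) - ln (G0 PXY y))" by (simp add: PX1 lnG)
    also have "ln (Q y) = ln (G0 PXY y) - ln S" using Gp S0 by (simp add: Q_def ln_div)
    finally show ?thesis by simp
  qed
  have "KL UNIV w PXY = ereal (\<Sum>z\<in>UNIV. if w z = 0 then 0 else w z * ln (w z / PXY z))"
    using ac by (simp add: KL_def)
  also have "(\<Sum>z\<in>UNIV. if w z = 0 then 0 else w z * ln (w z / PXY z))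
      = (\<Sum>y\<in>UNIV. \<Sum>x\<in>UNIV. if w (x,y) = 0 then 0 else w (x,y) * ln (w (x,y) / PXY (x,y)))"
  proof -
    define F where "F = (\<lambda>z. if w z = 0 then 0 else w z * ln (w z / PXY z))"
    have "(\<Sum>z\<in>UNIV. F z) = (\<Sum>z\<in>UNIV \<times> UNIV. F z)" by simp
    also have "\<dots> = (\<Sum>x\<in>UNIV. \<Sum>y\<in>UNIV. F (x,y))"
      using sum.cartesian_product[of "\<lambda>x y. F (x,y)" UNIV UNIV] by (simp add: case_prod_beta')
    also have "\<dots> = (\<Sum>y\<in>UNIV. \<Sum>x\<in>UNIV. F (x,y))" by (rule sum.swap)
    finally show ?thesis by (simp add: F_def)
  qed
  also have "\<dots> = (\<Sum>y\<in>UNIV. - Q y * ln S)" by (simp add: inner)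
  also have "\<dots> = - ln S" using Qd by (simp add: is_dist_def sum_negf sum_distrib_right[symmetric])
  finally have "KL UNIV w PXY = ereal (- ln S)" .
  moreover have "umlaut PXY \<le> KL UNIV w PXY"
    unfolding umlaut_def w_def PX_def using Qd by (intro INF_lower) auto
  ultimately show ?thesis by (simp add: S_def)
qed



lemma ediv_ge: assumes "ereal (real n * k) \<le> X" "0 < n"
  shows "ereal k \<le> X / ereal (real n)"
proof (cases X)
  case (real x)
  then have "real n * k \<le> x" using assms by simp
  then have "k \<le> x / real n" using assms(2) by (simp add: field_simps)
  then show ?thesis using real assms(2) by simp
next
  case PInf then show ?thesis using assms(2) by simp
next
  case MInf then show ?thesis using assms by simp
qed

lemma ediv_le: assumes "X \<le> ereal (real n * k + C)" "0 < n"
  shows "X / ereal (real n) \<le> ereal (k + C / real n)"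
proof (cases X)
  case (real x)
  then have "x \<le> real n * k + C" using assms by simp
  then have "x / real n \<le> k + C / real n" using assms(2) by (simp add: field_simps)
  then show ?thesis using real assms(2) by simp
next
  case PInf then show ?thesis using assms by simp
next
  case MInf then show ?thesis using assms(2) by simp
qed

theorem mainTheorem4:
  fixes PXY :: "'x::finite \<times> 'y::finite \<Rightarrow> real" and eps :: real
  assumes "is_dist UNIV PXY"
    and "0 < eps" and "eps < 1"
  shows "(\<lambda>n. DH eps (words UNIV n) (nullFamily (marginalX PXY) n) (iid PXY) / ereal (real n))
           \<longlonglongrightarrow> umlaut PXY"
proof -
  note P = assms(1) and eps = assms(2,3)
  define f where "f = (\<lambda>n. DH eps (words UNIV n) (nullFamily (marginalX PXY) n) (iid PXY) / ereal (real n))"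
  have low: "eventually (\<lambda>n. ereal r < f n) sequentially" if r: "ereal r < umlaut PXY" for r
  proof -
    define S where "S = (\<Sum>y\<in>UNIV. G0 PXY y)"
    have S0: "0 \<le> S" unfolding S_def by (intro sum_nonneg G0_nonneg)
    have Slt: "S < exp (- r)"
    proof (cases "S = 0")
      case True then show ?thesis by simp
    next
      case False
      then have "0 < S" using S0 by linarith
      then have "umlaut PXY \<le> ereal (- ln S)" using umlaut_le[OF P] by (simp add: S_def)
      then have "ereal r < ereal (- ln S)" using r by (rule less_le_trans[rotated])
      then have "r < - ln S" by simp
      then have "ln S < - r" by simp
      then have "exp (ln S) < exp (- r)" by simp
      then show ?thesis using \<open>0 < S\<close> by simp
    qed
    have "eventually (\<lambda>\<tau>. (\<Sum>y\<in>UNIV. Gt PXY \<tau> y) < exp (- r)) (at_right 0)"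
      using order_tendstoD(2)[OF Glim[OF P] Slt[unfolded S_def]] .
    then obtain b where b: "0 < b" "\<And>\<tau>. 0 < \<tau> \<Longrightarrow> \<tau> < b \<Longrightarrow> (\<Sum>y\<in>UNIV. Gt PXY \<tau> y) < exp (- r)"
      by (auto simp: eventually_at_right_field)
    define \<tau> where "\<tau> = b / 2"
    have \<tau>: "0 < \<tau>" "(\<Sum>y\<in>UNIV. Gt PXY \<tau> y) < exp (- r)" using b by (auto simp: \<tau>_def)
    define c where "c = (\<Sum>y\<in>UNIV. Gt PXY \<tau> y)"
    have c0: "0 < c" unfolding c_def by (intro sum_pos) (auto simp: Gt_def)
    have "ln c < ln (exp (- r))" using \<tau>(2) c0 by (simp only: c_def[symmetric] ln_less_cancel_iff exp_gt_zero)
    then have "ln c < - r" by simp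
    define \<delta> where "\<delta> = (- r - ln c) / 2"
    have \<delta>: "0 < \<delta>" using \<open>ln c < - r\<close> by (simp add: \<delta>_def)
    have k: "r < - \<delta> - ln c" using \<open>ln c < - r\<close> unfolding \<delta>_def by (simp add: field_simps)
    show ?thesis
      using achiev[OF P eps(1) \<tau>(1) \<delta>] eventually_gt_at_top[of 0]
    proof eventually_elim
      case (elim n)
      then have "ereal (- \<delta> - ln c) \<le> f n" unfolding f_def c_def by (intro ediv_ge) auto
      moreover have "ereal r < ereal (- \<delta> - ln c)" using k by simp
      ultimately show ?case by (rule less_le_trans[rotated])
    qed
  qed
  have up: "eventually (\<lambda>n. f n < u) sequentially" if u: "umlaut PXY < u" for u
  proof -
    from u obtain Q where Q: "is_dist UNIV Q" "KL UNIV (\<lambda>(x, y). marginalX PXY x * Q y) PXY < u"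
      unfolding umlaut_def by (auto simp: INF_less_iff)
    have "KL UNIV (\<lambda>(x, y). marginalX PXY x * Q y) PXY \<noteq> \<infinity>" using Q(2) by auto
    then obtain D where D: "KL UNIV (\<lambda>(x, y). marginalX PXY x * Q y) PXY = ereal D"
      by (auto simp: KL_def split: if_splits)
    obtain b where b: "ereal D < ereal b" "ereal b < u" using ereal_dense2[of "ereal D" u] Q(2) D by auto
    define \<delta> where "\<delta> = (b - D) / 2"
    have \<delta>: "0 < \<delta>" using b by (simp add: \<delta>_def)
    define C where "C = - ln ((1 - eps) / 2)"
    obtain N :: nat where N: "C < real N * \<delta>" using ex_less_of_nat_mult[OF \<delta>] by auto
    show ?thesis
      using converse[OF P Q(1) eps D \<delta>] eventually_ge_at_top[of "Suc N"]
    proof eventually_elim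
      case (elim n)
      then have n0: "0 < n" by simp
      have "C < real n * \<delta>"
      proof -
        have "real N \<le> real n" using elim(2) by simp
        then have "real N * \<delta> \<le> real n * \<delta>" using \<delta> by (intro mult_right_mono) auto
        then show ?thesis using N by linarith
      qed
      then have Cn: "C / real n < \<delta>" using n0 by (simp add: divide_less_eq mult.commute)
      have "f n \<le> ereal (D + \<delta> + C / real n)"
        unfolding f_def using elim(1) n0 by (intro ediv_le) (simp_all add: C_def)
      also have "\<dots> < ereal b" using Cn by (simp add: \<delta>_def field_simps)
      finally show ?case using b(2) by simp
    qed
  qed
  show ?thesis
    unfolding f_def[symmetric]
  proof (rule order_tendstoI)
    fix a assume a: "a < umlaut PXY"
    then obtain r where r: "a < ereal r" "ereal r < umlaut PXY" using ereal_dense2 by blast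
    show "eventually (\<lambda>n. a < f n) sequentially"
      using low[OF r(2)] by eventually_elim (use r(1) in auto)
  next
    fix u assume "umlaut PXY < u" then show "eventually (\<lambda>n. f n < u) sequentially" by (rule up)
  qed
qed

end
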